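(* Let $N\ge 2$ be an integer and $b_1,\dots,b_N\in\{0,1\}$ with $b_N=1$, and suppose $b:=\sum_{j=1}^N b_j2^{-j}$ satisfies $2^N b>1$ ($2^Nb$ is then an odd integer). Let $P_b(x)=x^N-\sum_{j=1}^N b_jx^{N-j}$. Then $P_b$ has a real root, and its largest real root $s_b$ (the silver number of index $b$) satisfies $1<s_b<2$. *)

theory Defs
  imports Complex_Main
begin

definition silverP :: "nat \<Rightarrow> (nat \<Rightarrow> nat) \<Rightarrow> real \<Rightarrow> real" where
  "silverP N b x = x ^ N - (\<Sum>j=1..N. real (b j) * x ^ (N - j))"

end

theory Submission
  imports Defs "HOL-Analysis.Analysis"
begin

lemma geo_lt: "(x::real) \<ge> 2 \<Longrightarrow> (\<Sum>k<n. x^k) < x^n"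
proof (induction n)
  case (Suc n)
  have "x^n \<ge> 0" using Suc by simp
  have "x ^ n + x^n \<le> x * x^n" using Suc \<open>x^n \<ge> 0\<close> using mult_right_mono[of 2 x "x^n"] by simp
  moreover have "(\<Sum>k<n. x^k) < x^n" using Suc by simp
  ultimately show ?case by simp
qed simp

lemma reidx: "(\<Sum>j=1..N. (x::real) ^ (N - j)) = (\<Sum>k<N. x^k)"
proof (induction N)
  case (Suc N)
  have "(\<Sum>j=1..Suc N. x ^ (Suc N - j)) = (\<Sum>j=1..N. x ^ (Suc N - j)) + 1"
    by simp
  also have "(\<Sum>j=1..N. x ^ (Suc N - j)) = (\<Sum>j=1..N. x * x ^ (N - j))"
    by (rule sum.cong) (auto simp: Suc_diff_le)
  also have "\<dots> = x * (\<Sum>k<N. x^k)" using Suc by (simp add: sum_distrib_left[symmetric])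
  also have "x * (\<Sum>k<N. x^k) + 1 = (\<Sum>k<Suc N. x^k)"
    by (simp add: sum_distrib_left lessThan_Suc_eq_insert_0 sum.reindex)
  finally show ?case .
qed simp

theorem mainTheorem4:
  fixes N :: nat and b :: "nat \<Rightarrow> nat"
  assumes "N \<ge> 2"
    and "\<forall>j\<in>{1..N}. b j \<in> {0, 1}"
    and "b N = 1"
    and "2 ^ N * (\<Sum>j=1..N. real (b j) / 2 ^ j) > 1"
  shows "(\<exists>x. silverP N b x = 0) \<and>
         (\<exists>s. silverP N b s = 0 \<and> (\<forall>x. silverP N b x = 0 \<longrightarrow> x \<le> s) \<and> 1 < s \<and> s < 2)"
proof -
  let ?P = "silverP N b"
  have cont: "continuous_on A ?P" for A
    unfolding silverP_def by (auto intro!: continuous_intros)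
  have pos: "?P x > 0" if x: "x \<ge> 2" for x
  proof -
    have "(\<Sum>j=1..N. real (b j) * x ^ (N - j)) \<le> (\<Sum>j=1..N. x ^ (N - j))"
      apply (rule sum_mono) using assms(2) x by fastforce
    also have "\<dots> < x ^ N" using reidx geo_lt x by metis
    finally show ?thesis unfolding silverP_def by simp
  qed
  have split: "{1..N} = insert N {1..<N}" using assms(1) by auto
  have "(\<Sum>j=1..<N. b j) \<noteq> 0"
  proof
    assume "(\<Sum>j=1..<N. b j) = 0"
    hence z: "\<forall>j\<in>{1..<N}. b j = 0" by simp
    have "(\<Sum>j=1..N. real (b j) / 2 ^ j) = 1 / 2^N + (\<Sum>j=1..<N. real (b j) / 2 ^ j)"
      unfolding split using assms(3) by simp
    also have "(\<Sum>j=1..<N. real (b j) / 2 ^ j) = 0" using z by simp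
    finally show False using assms(4) by simp
  qed
  hence "(\<Sum>j=1..<N. b j) \<ge> 1" by linarith
  hence "(\<Sum>j=1..N. b j) \<ge> 2" unfolding split using assms(3) by simp
  hence "(\<Sum>j=1..N. real (b j)) \<ge> 2"
    by (metis of_nat_sum of_nat_le_iff of_nat_numeral)
  hence P1: "?P 1 < 0" unfolding silverP_def by simp
  obtain x0 where x0: "1 \<le> x0" "x0 \<le> 2" "?P x0 = 0"
    using IVT'[of ?P 1 0 2] P1 pos[of 2] cont by force
  let ?S = "{x. ?P x = 0} \<inter> {1..2}"
  have "closed {x. ?P x = 0}"
    using continuous_closed_preimage_constant[OF cont[of UNIV]] by simp
  hence "compact ?S" by (intro closed_Int_compact) auto
  moreover have "?S \<noteq> {}" using x0 by auto
  ultimately obtain s where s: "s \<in> ?S" "\<forall>y\<in>?S. y \<le> s"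
    using compact_attains_sup by blast
  have "\<forall>x. ?P x = 0 \<longrightarrow> x \<le> s"
  proof (intro allI impI)
    fix x assume h: "?P x = 0"
    show "x \<le> s"
    proof (cases "x < 1")
      case True thus ?thesis using s by auto
    next
      case False
      moreover have "x < 2" using pos[of x] h by force
      ultimately show ?thesis using s h by auto
    qed
  qed
  moreover have "s \<noteq> 1" using s P1 by auto
  moreover have "s \<noteq> 2" using s pos[of 2] by auto
  ultimately show ?thesis using s by auto
qed

end
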